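(* Let $U:[0,T]\times\mathbb{R}^N\to\mathbb{R}\cup\{\pm\infty\}$ be proper and lower semicontinuous, and let $H:[0,T]\times\mathbb{R}^N\times\mathbb{R}^N\to\mathbb{R}$ satisfy (H1)–(H2); put $L(t,x,\cdot)=H^*(t,x,\cdot)$. Suppose that for every $(t,x)\in\mathrm{dom}\,U\cap(0,T]\times\mathbb{R}^N$ and every $(p_t,p_x)\in\partial U(t,x)$ one has $-p_t+H(t,x,-p_x)\leq0$. Then for every $(t,x)\in\mathrm{dom}\,U\cap(0,T]\times\mathbb{R}^N$, every $(n^t,n^x,n^u)\in N_{\mathrm{epi}\,U}(t,x,U(t,x))$ and every $v\in\mathrm{dom}\,L(t,x,\cdot)$, one has $n^t+\langle v,n^x\rangle-n^uL(t,x,v)\geq0$.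
   Context: (H1) $H$ is continuous in all variables. (H2) $H(t,x,p)$ is convex in $p$. $H^*(t,x,v)=\sup_p\{\langle v,p\rangle-H(t,x,p)\}$. $\mathrm{dom}\,\varphi=\{z:\varphi(z)\neq\pm\infty\}$, $\mathrm{epi}\,\varphi=\{(z,r):\varphi(z)\leq r\}$; proper means never $-\infty$ and not identically $+\infty$. $U$ is regarded as $+\infty$ outside $[0,T]\times\mathbb{R}^N$. Subderivative: $d\varphi(z)(v)=\liminf_{\tau\to0^+,y\to v}(\varphi(z+\tau y)-\varphi(z))/\tau$; subdifferential $\partial\varphi(z)=\{p:\langle v,p\rangle\leq d\varphi(z)(v)\ \forall v\}$. For $E\subset\mathbb{R}^M$, $w\in E$: $T_E(w)=\{\zeta:\liminf_{\tau\to0^+}\mathrm{dist}(w+\tau\zeta,E)/\tau=0\}$ and $N_E(w)=\{\xi:\langle\zeta,\xi\rangle\leq0\ \forall\zeta\in T_E(w)\}$. *)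

theory Defs
  imports "HOL-Analysis.Analysis"
begin

definition edom :: "('z \<Rightarrow> ereal) \<Rightarrow> 'z set" where
  "edom \<phi> = {z. \<phi> z \<noteq> \<infinity> \<and> \<phi> z \<noteq> -\<infinity>}"

definition epi :: "('z \<Rightarrow> ereal) \<Rightarrow> ('z \<times> real) set" where
  "epi \<phi> = {(z, r). \<phi> z \<le> ereal r}"

definition proper_fun :: "('z \<Rightarrow> ereal) \<Rightarrow> bool" where
  "proper_fun \<phi> \<longleftrightarrow> (\<forall>z. \<phi> z \<noteq> -\<infinity>) \<and> (\<exists>z. \<phi> z \<noteq> \<infinity>)"

definition lsc_on :: "'z::topological_space set \<Rightarrow> ('z \<Rightarrow> ereal) \<Rightarrow> bool" where
  "lsc_on S \<phi> \<longleftrightarrow> (\<forall>z\<in>S. \<phi> z \<le> Liminf (at z within S) \<phi>)"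

definition subderiv :: "('z::real_normed_vector \<Rightarrow> ereal) \<Rightarrow> 'z \<Rightarrow> 'z \<Rightarrow> ereal" where
  "subderiv \<phi> z v =
     Liminf (at_right (0::real) \<times>\<^sub>F nhds v)
       (\<lambda>(\<tau>, y). (\<phi> (z + \<tau> *\<^sub>R y) - \<phi> z) / ereal \<tau>)"

definition subdiff :: "('z::real_inner \<Rightarrow> ereal) \<Rightarrow> 'z \<Rightarrow> 'z set" where
  "subdiff \<phi> z = {p. \<forall>v. ereal (inner v p) \<le> subderiv \<phi> z v}"

definition tangent_cone :: "'w::real_normed_vector set \<Rightarrow> 'w \<Rightarrow> 'w set" where
  "tangent_cone E w =
     {\<zeta>. Liminf (at_right (0::real)) (\<lambda>\<tau>. ereal (infdist (w + \<tau> *\<^sub>R \<zeta>) E / \<tau>)) = 0}"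

definition normal_cone :: "'w::real_inner set \<Rightarrow> 'w \<Rightarrow> 'w set" where
  "normal_cone E w = {\<xi>. \<forall>\<zeta>\<in>tangent_cone E w. inner \<zeta> \<xi> \<le> 0}"

definition conj_H :: "(real \<Rightarrow> 'a::real_inner \<Rightarrow> 'a \<Rightarrow> real) \<Rightarrow> real \<Rightarrow> 'a \<Rightarrow> 'a \<Rightarrow> ereal" where
  "conj_H H t x v = (SUP p. ereal (inner v p - H t x p))"

end

theory Submission
  imports Defs
begin

lemma norm_p1_pos[simp]: "0 < norm (x::'a::real_normed_vector) + 1"
  by (smt (verit) norm_ge_zero)

lemma norm_p1_ne[simp]: "norm (x::'a::real_normed_vector) + 1 \<noteq> 0"
  by (smt (verit) norm_ge_zero)

lemma lsc_pt:
  fixes U :: "'z::metric_space \<Rightarrow> ereal"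
  assumes out: "\<And>z. z \<notin> S \<Longrightarrow> U z = \<infinity>" and cS: "closed S" and l: "lsc_on S U"
    and c: "ereal c < U z"
  shows "\<exists>d>0. \<forall>z'. dist z' z < d \<longrightarrow> ereal c < U z'"
proof (cases "z \<in> S")
  case True
  have "ereal c < Liminf (at z within S) U" using l True c unfolding lsc_on_def by (meson less_le_trans)
  hence "\<forall>\<^sub>F x in at z within S. ereal c < U x" by (rule less_LiminfD)
  then obtain d where d: "d > 0" "\<forall>x\<in>S. x \<noteq> z \<and> dist x z < d \<longrightarrow> ereal c < U x"
    unfolding eventually_at by blast
  show ?thesis
  proof (intro exI[of _ d] conjI allI impI)
    fix z' assume "dist z' z < d"
    thus "ereal c < U z'" using d c out[of z'] by (cases "z' = z"; cases "z' \<in> S") auto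
  qed (use d in auto)
next
  case False
  have "open (- S)" using cS by auto
  then obtain d where d: "d > 0" "ball z d \<subseteq> - S" using False by (meson ComplI openE)
  show ?thesis
  proof (intro exI[of _ d] conjI allI impI)
    fix z' assume "dist z' z < d"
    hence "z' \<notin> S" using d by (auto simp: dist_commute)
    thus "ereal c < U z'" using out by auto
  qed (use d in auto)
qed

lemma fre_subdiff:
  fixes U :: "'z::real_inner \<Rightarrow> ereal"
  assumes u: "U z = ereal u"
    and fre: "\<And>e. e > 0 \<Longrightarrow> \<exists>d>0. \<forall>h. norm h < d \<longrightarrow> ereal (u + inner p h - e * norm h) \<le> U (z + h)"
  shows "p \<in> subdiff U z"
  unfolding subdiff_def
proof (intro CollectI allI)
  fix v
  show "ereal (inner v p) \<le> subderiv U z v"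
    unfolding subderiv_def le_Liminf_iff
  proof (intro allI impI)
    fix C assume "C < ereal (inner v p)"
    then obtain c where c: "C < ereal c" "ereal c < ereal (inner v p)" using ereal_dense2 by blast
    define g where "g = inner v p - c"
    have g: "g > 0" using c by (simp add: g_def)
    define e where "e = (g / 4) / (norm v + 1)"
    have e: "e > 0" unfolding e_def using g by (intro divide_pos_pos) auto
    obtain d where d: "d > 0" "\<forall>h. norm h < d \<longrightarrow> ereal (u + inner p h - e * norm h) \<le> U (z + h)"
      using fre[OF e] by blast
    define r where "r = min 1 (g / (4 * (norm p + 1)))"
    have r: "r > 0" unfolding r_def using g norm_ge_zero[of p] by (simp, intro divide_pos_pos) (simp_all add: algebra_simps add_pos_nonneg)
    define b where "b = d / (norm v + 1)"
    have b: "b > 0" unfolding b_def using d norm_ge_zero[of v] by (intro divide_pos_pos) (simp_all add: algebra_simps add_pos_nonneg)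
    have ev1: "\<forall>\<^sub>F t in at_right (0::real). 0 < t \<and> t < b"
      unfolding eventually_at_right_field using b by auto
    have ev2: "\<forall>\<^sub>F y in nhds v. dist y v < r"
      unfolding eventually_nhds_metric using r by auto
    have nv: "0 < norm v + 1" by (smt (verit) norm_ge_zero)
    have key: "C < (U (z + t *\<^sub>R y) - U z) / ereal t" if t: "0 < t" "t < b" and y: "dist y v < r" for t y
    proof -
      have ny: "norm y \<le> norm v + 1"
        using y r norm_triangle_ineq2[of y v] by (simp add: dist_norm r_def)
      have "norm (t *\<^sub>R y) = t * norm y" using t by simp
      also have "\<dots> \<le> t * (norm v + 1)" using ny t by (simp add: mult_left_mono)
      also have "\<dots> < b * (norm v + 1)" using t nv by (intro mult_strict_right_mono) auto
      also have "\<dots> = d" using nv by (simp add: b_def)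
      finally have "norm (t *\<^sub>R y) < d" .
      hence U1: "ereal (u + inner p (t *\<^sub>R y) - e * norm (t *\<^sub>R y)) \<le> U (z + t *\<^sub>R y)" using d by blast
      have ip: "inner p y \<ge> inner v p - g / 4"
      proof -
        have "inner p v - inner p y = inner p (v - y)" by (simp add: inner_diff_right)
        also have "\<dots> \<le> norm p * norm (v - y)" using norm_cauchy_schwarz by blast
        also have "\<dots> \<le> norm p * r" using y by (simp add: dist_norm norm_minus_commute mult_left_mono)
        also have "\<dots> \<le> norm p * (g / (4 * (norm p + 1)))" unfolding r_def by (intro mult_left_mono) auto
        also have "\<dots> \<le> g / 4"
        proof -
          have "norm p * (g / (4 * (norm p + 1))) = (g/4) * (norm p / (norm p + 1))" by (simp add: field_simps)
          also have "\<dots> \<le> (g/4) * 1" using g by (intro mult_left_mono) (auto simp: divide_le_eq_1 add_pos_nonneg)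
          finally show ?thesis by simp
        qed
        finally show ?thesis by (simp add: inner_commute)
      qed
      have en: "e * norm y \<le> g / 4"
      proof -
        have "e * norm y \<le> e * (norm v + 1)" using ny e by (simp add: mult_left_mono)
        also have "\<dots> = g / 4" unfolding e_def using nv by (simp add: field_simps)
        finally show ?thesis .
      qed
      have lb: "c < inner p y - e * norm y" using ip en g unfolding g_def by (simp add: field_simps)
      show ?thesis
      proof (cases "U (z + t *\<^sub>R y)")
        case (real w)
        have "u + t * inner p y - e * (t * norm y) \<le> w" using U1 real t by simp
        hence "inner p y - e * norm y \<le> (w - u) / t" using t by (simp add: field_simps)
        hence "c < (w - u) / t" using lb by simp
        thus ?thesis using real u t c(1) by (simp add: less_le_trans order.strict_trans1)
      next
        case PInf
        thus ?thesis using u t c(1) by (cases C) auto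
      next
        case MInf
        thus ?thesis using U1 by simp
      qed
    qed
    show "\<forall>\<^sub>F x in at_right 0 \<times>\<^sub>F nhds v. C < (case x of (t, y) \<Rightarrow> (U (z + t *\<^sub>R y) - U z) / ereal t)"
      unfolding eventually_prod_filter
      by (intro exI[of _ "\<lambda>t. 0 < t \<and> t < b"] exI[of _ "\<lambda>y. dist y v < r"] conjI ev1 ev2) (auto intro: key)
  qed
qed

lemma reg_normal:
  fixes E :: "'w::euclidean_space set"
  assumes xi: "\<xi> \<in> normal_cone E w0" and e: "e > 0"
  shows "\<exists>d>0. \<forall>w\<in>E. norm (w - w0) < d \<longrightarrow> inner \<xi> (w - w0) \<le> e * norm (w - w0)"
proof (rule ccontr)
  assume "\<not> ?thesis"
  hence "\<forall>n::nat. \<exists>w\<in>E. norm (w - w0) < 1/Suc n \<and> inner \<xi> (w - w0) > e * norm (w - w0)"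
    by (metis not_le of_nat_0_less_iff zero_less_Suc zero_less_divide_1_iff)
  then obtain W where W: "\<And>n. W n \<in> E" "\<And>n. norm (W n - w0) < 1/Suc n"
     "\<And>n. inner \<xi> (W n - w0) > e * norm (W n - w0)" by metis
  have Wne: "norm (W n - w0) > 0" for n
  proof -
    have "W n \<noteq> w0" using W(3)[of n] by auto
    thus ?thesis by simp
  qed
  define D where "D n = (1/norm (W n - w0)) *\<^sub>R (W n - w0)" for n
  have WD: "W n - w0 = norm (W n - w0) *\<^sub>R D n" for n
    using Wne[of n] by (simp add: D_def)
  have Ds: "D n \<in> sphere 0 1" for n using Wne[of n] by (simp add: D_def)
  obtain l r where l: "l \<in> sphere 0 1" and r: "strict_mono r" and lim: "(D \<circ> r) \<longlonglongrightarrow> l"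
    using compact_imp_seq_compact[OF compact_sphere] Ds by (metis seq_compactE)
  have De: "inner (D n) \<xi> > e" for n
  proof -
    have "inner (D n) \<xi> = inner \<xi> (W n - w0) / norm (W n - w0)"
      by (simp add: D_def inner_commute)
    also have "\<dots> > e" using W(3)[of n] Wne[of n] by (simp add: field_simps)
    finally show ?thesis .
  qed
  have "l \<in> tangent_cone E w0"
    unfolding tangent_cone_def
  proof (intro CollectI antisym)
    show "0 \<le> Liminf (at_right 0) (\<lambda>\<tau>. ereal (infdist (w0 + \<tau> *\<^sub>R l) E / \<tau>))"
      by (intro Liminf_bounded) (auto simp: eventually_at_right_field infdist_nonneg intro!: exI[of _ 1])
    show "Liminf (at_right 0) (\<lambda>\<tau>. ereal (infdist (w0 + \<tau> *\<^sub>R l) E / \<tau>)) \<le> 0"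
    proof (rule Liminf_least)
      fix P assume "eventually P (at_right (0::real))"
      then obtain b where b: "b > 0" "\<And>\<tau>. \<tau> > 0 \<Longrightarrow> \<tau> < b \<Longrightarrow> P \<tau>"
        unfolding eventually_at_right_field by auto
      show "Inf ((\<lambda>\<tau>. ereal (infdist (w0 + \<tau> *\<^sub>R l) E / \<tau>)) ` Collect P) \<le> 0"
      proof (rule ereal_le_epsilon2)
        fix \<epsilon> :: real assume \<epsilon>: "\<epsilon> > 0"
        have ev1: "\<forall>\<^sub>F k in sequentially. dist ((D \<circ> r) k) l < \<epsilon>"
          using lim \<epsilon> by (rule tendstoD)
        obtain N where N: "1 / real (Suc N) < b"
          using b(1) by (metis Suc_eq_plus1 nat_approx_posE)
        have ev2: "\<forall>\<^sub>F k in sequentially. 1 / real (Suc k) < b"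
          unfolding eventually_sequentially
        proof (intro exI[of _ N] allI impI)
          fix k assume "N \<le> k"
          hence "1 / real (Suc k) \<le> 1 / real (Suc N)" by (simp add: frac_le)
          thus "1 / real (Suc k) < b" using N by linarith
        qed
        obtain k where k1: "dist ((D \<circ> r) k) l < \<epsilon>" and k2: "1 / real (Suc k) < b"
          using eventually_happens'[OF _ eventually_conj[OF ev1 ev2]] by auto
        define \<tau> where "\<tau> = norm (W (r k) - w0)"
        have \<tau>0: "\<tau> > 0" using Wne by (simp add: \<tau>_def)
        have "\<tau> < 1 / Suc (r k)" using W(2) by (simp add: \<tau>_def)
        also have "\<dots> \<le> 1 / Suc k" using seq_suble[OF r, of k] by (simp add: frac_le)
        finally have \<tau>b: "\<tau> < b" using k2 by linarith
        have "infdist (w0 + \<tau> *\<^sub>R l) E \<le> dist (w0 + \<tau> *\<^sub>R l) (W (r k))"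
          using W(1) by (rule infdist_le)
        also have "\<dots> = norm (\<tau> *\<^sub>R l - (W (r k) - w0))" by (simp add: dist_norm algebra_simps)
        also have "\<dots> = norm (\<tau> *\<^sub>R (l - D (r k)))"
        proof -
          have eq: "W (r k) - w0 = \<tau> *\<^sub>R D (r k)" unfolding \<tau>_def by (rule WD)
          show ?thesis by (simp only: eq scaleR_diff_right)
        qed
        also have "\<dots> = \<tau> * dist (D (r k)) l" using \<tau>0 by (simp add: dist_norm norm_minus_commute)
        finally have "infdist (w0 + \<tau> *\<^sub>R l) E / \<tau> \<le> dist (D (r k)) l"
          using \<tau>0 by (simp add: divide_le_eq mult.commute)
        hence le: "infdist (w0 + \<tau> *\<^sub>R l) E / \<tau> \<le> \<epsilon>" using k1 by simp
        have "Inf ((\<lambda>\<tau>. ereal (infdist (w0 + \<tau> *\<^sub>R l) E / \<tau>)) ` Collect P)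
              \<le> ereal (infdist (w0 + \<tau> *\<^sub>R l) E / \<tau>)"
          using b(2)[OF \<tau>0 \<tau>b] by (intro Inf_lower) auto
        also have "\<dots> \<le> 0 + ereal \<epsilon>" using le by simp
        finally show "Inf ((\<lambda>\<tau>. ereal (infdist (w0 + \<tau> *\<^sub>R l) E / \<tau>)) ` Collect P) \<le> 0 + ereal \<epsilon>" .
      qed
    qed
  qed
  hence l0: "inner l \<xi> \<le> 0" using xi unfolding normal_cone_def by blast
  have "(\<lambda>n. inner ((D \<circ> r) n) \<xi>) \<longlonglongrightarrow> inner l \<xi>"
    using lim by (intro tendsto_intros)
  moreover have "\<forall>n. e \<le> inner ((D \<circ> r) n) \<xi>" using De by (simp add: less_imp_le)
  ultimately have "e \<le> inner l \<xi>" by (intro LIMSEQ_le_const) auto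
  thus False using l0 e by linarith
qed

lemma nu_nonpos:
  fixes U :: "'z::real_inner \<Rightarrow> ereal"
  assumes "((z, nu) :: 'z \<times> real) \<in> normal_cone (epi U) (z0, u0)" "U z0 \<le> ereal u0"
  shows "nu \<le> 0"
proof -
  have "((0::'z), (1::real)) \<in> tangent_cone (epi U) (z0, u0)"
    unfolding tangent_cone_def
  proof (intro CollectI)
    have "infdist ((z0, u0) + \<tau> *\<^sub>R ((0::'z), (1::real))) (epi U) = 0" if "\<tau> > 0" for \<tau>
    proof -
      have "(z0, u0 + \<tau>) \<in> epi U" using assms(2) that unfolding epi_def
        by (auto intro: order.trans)
      thus ?thesis by (simp add: infdist_zero)
    qed
    hence "\<forall>\<^sub>F \<tau> in at_right (0::real). ereal (infdist ((z0, u0) + \<tau> *\<^sub>R ((0::'z), (1::real))) (epi U) / \<tau>) = 0"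
      by (auto simp: eventually_at_right_field intro!: exI[of _ 1])
    hence "Liminf (at_right (0::real)) (\<lambda>\<tau>. ereal (infdist ((z0, u0) + \<tau> *\<^sub>R ((0::'z), (1::real))) (epi U) / \<tau>))
        = Liminf (at_right (0::real)) (\<lambda>\<tau>. 0)" by (rule Liminf_eq)
    also have "\<dots> = 0" by (simp add: Liminf_const)
    finally show "Liminf (at_right 0) (\<lambda>\<tau>. ereal (infdist ((z0, u0) + \<tau> *\<^sub>R (0, 1)) (epi U) / \<tau>)) = 0" .
  qed
  thus ?thesis using assms(1) unfolding normal_cone_def by (auto simp: inner_Pair)
qed

lemma norm_pair_le: "norm (a, b) \<le> norm a + norm b"
  by (simp add: norm_Pair) (metis norm_ge_zero real_sqrt_sum_squares_triangle_ineq sqrt_sum_squares_le_sum_abs abs_of_nonneg)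

lemma A1:
  fixes mu eps e P n q s :: real
  assumes "mu > 0" "eps \<ge> 0" "eps \<le> mu/2" "eps*(2*P+2) \<le> e*mu" "P \<ge> 0" "n \<ge> 0" "\<bar>q\<bar> \<le> P*n"
   "s < q" "mu*q - mu* s \<le> eps*n + eps*\<bar>s\<bar>"
  shows "s \<ge> q - e*n"
proof (cases "s \<ge> 0")
  case True
  have "s \<le> P*n" using assms by linarith
  hence "eps * s \<le> eps*(P*n)" using assms by (simp add: mult_left_mono)
  hence "mu*(q - s) \<le> eps*(1+P)*n" using assms True by (simp add: algebra_simps)
  also have "\<dots> \<le> (e*mu/2) * n" using assms 
    by (intro mult_right_mono) (auto simp: algebra_simps)
  finally have "mu*(q - s) \<le> mu*(e*n/2)" by (simp add: algebra_simps)
  hence "q - s \<le> e*n/2" using assms(1) by simp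
  moreover have "e*n \<ge> 0" 
  proof -
    have "eps*(2*P+2) \<ge> 0" using assms by simp
    hence "e*mu \<ge> 0" using assms by linarith
    hence "e \<ge> 0" using assms(1) by (simp add: zero_le_mult_iff)
    thus ?thesis using assms by simp
  qed
  ultimately show ?thesis by linarith
next
  case False
  hence "mu*q - mu* s \<le> eps*n - eps* s" using assms by simp
  hence "(mu - eps)*(-s) \<le> eps*n - mu*q" by (simp add: algebra_simps)
  also have "\<dots> \<le> eps*n + mu*(P*n)"
  proof -
    have "- q \<le> P*n" using assms by linarith
    hence "mu*(-q) \<le> mu*(P*n)" using assms(1) by (metis mult_left_mono less_imp_le)
    thus ?thesis by simp
  qed
  also have "\<dots> \<le> (mu - eps)*((1+2*P)*n)"
  proof -
    have "eps*n + mu*(P*n) - (mu - eps)*((1+2*P)*n) = n*((2+2*P)*eps - mu*(1+P))" by (simp add: algebra_simps)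
    also have "\<dots> \<le> 0"
    proof -
      have "(2+2*P)*eps \<le> (2+2*P)*(mu/2)" using assms by (intro mult_left_mono) auto
      hence "(2+2*P)*eps - mu*(1+P) \<le> 0" by (simp add: algebra_simps)
      thus ?thesis using assms(6) by (simp add: mult_nonneg_nonpos)
    qed
    finally show ?thesis by simp
  qed
  finally have ms0: "(mu - eps)*(-s) \<le> (mu - eps)*((1+2*P)*n)" .
  have "mu - eps > 0" using assms by linarith
  with ms0 have ms: "-s \<le> (1+2*P)*n" by (rule mult_left_le_imp_le)
  have "mu*(q - s) \<le> eps*n + eps*(-s)" using assms False by (simp add: algebra_simps)
  also have "\<dots> \<le> eps*n + eps*((1+2*P)*n)" using mult_left_mono[OF ms assms(2)] by linarith
  also have "\<dots> = (eps*(2*P+2))*n" by (simp add: algebra_simps)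
  also have "\<dots> \<le> (e*mu)*n" using assms by (intro mult_right_mono) auto
  finally have "mu*(q - s) \<le> mu*(e*n)" by (simp add: algebra_simps)
  thus ?thesis using assms(1) by simp
qed

lemma nonhoriz_subgrad:
  fixes U :: "'z::euclidean_space \<Rightarrow> ereal"
  assumes LSC: "\<And>z c. ereal c < U z \<Longrightarrow> \<exists>d>0. \<forall>z'. dist z' z < d \<longrightarrow> ereal c < U z'"
    and u0: "U z0 = ereal u0"
    and reg: "\<And>\<epsilon>. \<epsilon>>0 \<Longrightarrow> \<exists>\<delta>>0. \<forall>w\<in>epi U. norm (w - (z0,u0)) < \<delta> \<longrightarrow>
                 inner (y, c) (w - (z0,u0)) \<le> \<epsilon> * norm (w - (z0,u0))"
    and c: "c < 0"
  shows "(1/(-c)) *\<^sub>R y \<in> subdiff U z0"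
proof (rule fre_subdiff[of U z0 u0, OF u0])
  define m where "m = - c"
  have m: "m > 0" using c by (simp add: m_def)
  define p where "p = (1/(-c)) *\<^sub>R y"
  have yp: "y = m *\<^sub>R p" using m by (simp add: p_def m_def)
  fix e :: real assume e: "e > 0"
  define P where "P = norm p"
  define ep where "ep = min (m/2) (e*m/(2*P+2))"
  have P0: "P \<ge> 0" by (simp add: P_def)
  have ep: "ep > 0" "ep \<le> m/2" "ep*(2*P+2) \<le> e*m"
  proof -
    have q: "2*P+2 > 0" using P0 by linarith
    thus "ep > 0" using m e by (simp add: ep_def)
    show "ep \<le> m/2" unfolding ep_def by (rule min.cobounded1)
    have "ep \<le> e*m/(2*P+2)" unfolding ep_def by (rule min.cobounded2)
    hence "ep*(2*P+2) \<le> e*m/(2*P+2)*(2*P+2)" using q by (intro mult_right_mono) auto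
    thus "ep*(2*P+2) \<le> e*m" using q by simp
  qed
  obtain \<delta> where \<delta>: "\<delta> > 0" "\<forall>w\<in>epi U. norm (w - (z0,u0)) < \<delta> \<longrightarrow>
                 inner (y, c) (w - (z0,u0)) \<le> ep * norm (w - (z0,u0))"
    using reg[OF ep(1)] by blast
  obtain d1 where d1: "d1 > 0" "\<forall>z'. dist z' z0 < d1 \<longrightarrow> ereal (u0 - \<delta>/2) < U z'"
    using LSC[of "u0 - \<delta>/2" z0] u0 \<delta> by auto
  define d where "d = min d1 (\<delta> / (2*(P+1)))"
  have d: "d > 0" using d1 \<delta> P0 by (auto simp: d_def intro!: divide_pos_pos)
  show "\<exists>d>0. \<forall>h. norm h < d \<longrightarrow> ereal (u0 + inner ((1/(-c)) *\<^sub>R y) h - e * norm h) \<le> U (z0 + h)"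
  proof (intro exI[of _ d] conjI allI impI d)
    fix h :: 'z assume h: "norm h < d"
    have hd1: "dist (z0 + h) z0 < d1" using h by (simp add: dist_norm d_def)
    have hP: "P * norm h \<le> \<delta>/2"
    proof -
      have "P * norm h \<le> P * (\<delta> / (2*(P+1)))" using h P0 by (intro mult_left_mono) (auto simp: d_def)
      also have "\<dots> = (\<delta>/2) * (P/(P+1))" using P0 by (simp add: field_simps)
      also have "\<dots> \<le> (\<delta>/2) * 1" using P0 \<delta> by (intro mult_left_mono) auto
      finally show ?thesis by simp
    qed
    have ipb: "\<bar>inner p h\<bar> \<le> P * norm h" unfolding P_def by (rule Cauchy_Schwarz_ineq2)
    show "ereal (u0 + inner ((1/(-c)) *\<^sub>R y) h - e * norm h) \<le> U (z0 + h)"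
    proof (cases "U (z0 + h)")
      case PInf thus ?thesis by simp
    next
      case MInf thus ?thesis using d1 hd1 by force
    next
      case (real w)
      define s where "s = w - u0"
      have sl: "s > - (\<delta>/2)" using d1 hd1 real by (force simp: s_def)
      have "s \<ge> inner p h - e * norm h"
      proof (cases "s \<ge> inner p h")
        case True
        moreover have "e * norm h \<ge> 0" using e by simp
        ultimately show ?thesis by linarith
      next
        case False
        have sa: "\<bar>s\<bar> < \<delta>/2" using False sl ipb hP by linarith
        have inE: "(z0 + h, w) \<in> epi U" using real by (simp add: epi_def)
        have "norm ((z0 + h, w) - (z0, u0)) = norm (h, s)" by (simp add: s_def)
        also have "\<dots> \<le> norm h + \<bar>s\<bar>" using norm_pair_le[of h s] by simp
        finally have nw: "norm ((z0 + h, w) - (z0, u0)) \<le> norm h + \<bar>s\<bar>" .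
        have "norm h < \<delta>/2"
        proof -
          have "d \<le> \<delta> / (2*(P+1))" by (simp add: d_def)
          also have "\<dots> \<le> \<delta>/2" using P0 \<delta> by (simp add: field_simps)
          finally show ?thesis using h by simp
        qed
        hence "norm ((z0 + h, w) - (z0, u0)) < \<delta>" using nw sa by linarith
        hence "inner (y, c) ((z0 + h, w) - (z0,u0)) \<le> ep * norm ((z0 + h, w) - (z0,u0))"
          using \<delta>(2) inE by blast
        also have "\<dots> \<le> ep * (norm h + \<bar>s\<bar>)" using nw ep by (intro mult_left_mono) auto
        finally have "m * inner p h - m * s \<le> ep * norm h + ep * \<bar>s\<bar>"
          by (simp add: yp s_def m_def inner_Pair algebra_simps)
        moreover have "s < inner p h" using False by simp
        ultimately show ?thesis using A1[OF m less_imp_le[OF ep(1)] ep(2) ep(3) P0 norm_ge_zero ipb] by blast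
      qed
      thus ?thesis using real by (simp add: s_def p_def)
    qed
  qed
qed

lemma B1: fixes a b :: real
  shows "(max a 0)^2 - (max b 0)^2 \<le> 2 * max b 0 * (a - b) + (a - b)^2"
proof (cases "a \<ge> 0")
  case True
  show ?thesis
  proof (cases "b \<ge> 0")
    case True
    thus ?thesis using \<open>a \<ge> 0\<close> by (simp add: power2_eq_square algebra_simps)
  next
    case False
    have "a^2 \<le> (a - b)^2" using \<open>a \<ge> 0\<close> False by (intro power_mono) auto
    thus ?thesis using \<open>a \<ge> 0\<close> False by simp
  qed
next
  case False
  show ?thesis
  proof (cases "b \<ge> 0")
    case True
    have "-(b^2) \<le> 2*b*(a-b) + (a-b)^2" by (simp add: power2_eq_square algebra_simps)
    thus ?thesis using False True by simp
  next
    case bn: False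
    thus ?thesis using False by simp
  qed
qed

lemma A3: fixes X t a b :: real
  assumes "X \<ge> 0" "t > 0" "a \<ge> 0" "b \<ge> 0" "X^2 \<le> 2*t*a*X + 2*t^2*b"
  shows "X \<le> t*(2*a + 1 + 2*b)"
proof (rule ccontr)
  assume "\<not> ?thesis"
  hence gt: "X > t*(2*a+1+2*b)" by simp
  have "X^2 = X * X" by (simp add: power2_eq_square)
  also have "\<dots> > t*(2*a+1+2*b) * X" using gt assms by (intro mult_strict_right_mono) (auto, smt (verit) mult_nonneg_nonneg)
  finally have "t*(2*a+1+2*b)*X < 2*t*a*X + 2*t^2*b" using assms by linarith
  hence "t*((1+2*b)*X) < t*(2*t*b)" by (simp add: algebra_simps power2_eq_square)
  hence "(1+2*b)*X < 2*t*b" using assms(2) by simp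
  moreover have "(1+2*b)*X > (1+2*b)*(t*(2*a+1+2*b))" using gt assms by (intro mult_strict_left_mono) auto
  moreover have "(1+2*b)*(t*(2*a+1+2*b)) \<ge> 2*t*b"
  proof -
    have "2*t*b = 2*b*(t*1)" by simp
    also have "\<dots> \<le> 2*b*(t*(2*a+1+2*b))" using assms by (intro mult_left_mono) auto
    also have "\<dots> \<le> (1+2*b)*(t*(2*a+1+2*b))" using assms
      by (intro mult_right_mono) (auto intro!: mult_nonneg_nonneg)
    finally show ?thesis .
  qed
  ultimately show False by linarith
qed

lemma A4: fixes X t \<beta> M :: real
  assumes "X \<ge> 0" "t > 0" "\<beta> > 0" "M \<ge> 0" "X^2 \<le> 2*t*(\<beta>/4)*X + 2*t^2*(\<beta>^2/(4*(M+1)))*M"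
  shows "X \<le> t*\<beta>"
proof (rule ccontr)
  assume "\<not> ?thesis"
  hence gt: "X > t*\<beta>" by simp
  have tb: "t*\<beta> > 0" using assms by simp
  have X0: "X > 0" using gt tb by linarith
  have "X^2 = X * X" by (simp add: power2_eq_square)
  also have "\<dots> > t*\<beta>*X" using gt X0 by (intro mult_strict_right_mono) auto
  finally have c1: "t*\<beta>*X < X^2" .
  have e1: "2*t*(\<beta>/4)*X = (t*\<beta>*X)/2" by simp
  have M1: "M + 1 > 0" using assms(4) by simp
  have e2: "2*t^2*(\<beta>^2/(4*(M+1)))*M = (t^2*\<beta>^2*(M/(M+1)))/2"
  proof -
    have "2*t^2*(\<beta>^2/(4*(M+1)))*M = (t^2*\<beta>^2*M)/(2*(M+1))" by (simp add: divide_simps)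
    also have "\<dots> = (t^2*\<beta>^2*(M/(M+1)))/2" by (simp add: divide_simps)
    finally show ?thesis .
  qed
  have c2: "t*\<beta>*X < (t*\<beta>*X)/2 + (t^2*\<beta>^2*(M/(M+1)))/2" using c1 assms(5) unfolding e1 e2 by linarith
  have "M/(M+1) \<le> 1" using assms(4) by simp
  hence c3: "t^2*\<beta>^2*(M/(M+1)) \<le> t^2*\<beta>^2*1" using assms by (intro mult_left_mono) auto
  have lin: "\<And>A Z W::real. A < A/2 + Z/2 \<Longrightarrow> Z \<le> W \<Longrightarrow> A < W" by linarith
  have "t*\<beta>*X < t^2*\<beta>^2*1" by (rule lin[OF c2 c3])
  hence "t*\<beta>*X < (t*\<beta>)*(t*\<beta>)" by (simp add: power2_eq_square algebra_simps)
  hence "X < t*\<beta>" using tb by (simp add: mult_less_cancel_left_pos)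
  thus False using gt by simp
qed

lemma A2: fixes a s q n P \<kappa> e :: real
  assumes a: "a > 0" and n: "n \<ge> 0" and P: "P \<ge> 0" and q: "\<bar>q\<bar> \<le> P*n"
    and main: "2*a* s + s^2 \<ge> 2*a*q - n^2" and sk: "s > -\<kappa>" and ka: "\<kappa> \<le> a" and na: "n \<le> a"
    and ne: "n*(1+(2*P+1)^2) \<le> 2*a*e" and e: "e > 0"
  shows "s \<ge> q - e*n"
proof (cases "s \<ge> q")
  case True
  have "e*n \<ge> 0" using e n by simp
  thus ?thesis using True by linarith
next
  case False
  define K where "K = 2*P+1"
  have PK: "P*n \<le> K*n" using n P by (intro mult_right_mono) (auto simp: K_def)
  have sK: "\<bar>s\<bar> \<le> K*n"
  proof (cases "s \<ge> 0")
    case True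
    thus ?thesis using False q PK by linarith
  next
    case sn: False
    have "s^2 = (-s) * (-s)" by (simp add: power2_eq_square)
    also have "\<dots> \<le> \<kappa> * (-s)" using sk sn by (intro mult_right_mono) auto
    also have "\<dots> \<le> a * (-s)" using ka sn by (intro mult_right_mono) auto
    finally have s2: "s^2 \<le> a * (-s)" .
    have m1: "a * (-s) = -(a* s)" by simp
    have m2: "a*(-q) \<le> a*(P*n)" using q a by (intro mult_left_mono) auto
    have m3: "a*(-q) = -(a*q)" by simp
    have m4: "n^2 \<le> a*n" using na n by (simp add: power2_eq_square mult_right_mono)
    have m5: "a*(K*n) = 2*(a*(P*n)) + a*n" by (simp add: K_def algebra_simps)
    have m6: "2*a* s = 2*(a* s)" "2*a*q = 2*(a*q)" by simp_all
    have lin: "\<And>A Q B N C Dn::real. 2*A + Q \<ge> 2*B - N \<Longrightarrow> Q \<le> -A \<Longrightarrow> -B \<le> C \<Longrightarrow> N \<le> Dn \<Longrightarrow> -A \<le> 2*C + Dn"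
      by linarith
    have g1: "2*(a*q) - n^2 \<le> 2*(a* s) + s^2" using main by (simp only: mult.assoc)
    have g2: "s^2 \<le> -(a* s)" using s2 unfolding m1 .
    have g3: "-(a*q) \<le> a*(P*n)" using m2 unfolding m3 .
    have "-(a* s) \<le> 2*(a*(P*n)) + a*n" by (rule lin[OF g1 g2 g3 m4])
    hence "a*(-s) \<le> a*(K*n)" using m1 m5 by simp
    hence "-s \<le> K*n" using a by (rule mult_left_le_imp_le[of a])
    thus ?thesis using sn by simp
  qed
  have s2: "s^2 \<le> K^2 * n^2"
  proof -
    have "s^2 = \<bar>s\<bar>^2" by (rule power2_abs[symmetric])
    also have "\<dots> \<le> (K*n)^2" using sK by (intro power_mono) auto
    also have "\<dots> = K^2 * n^2" by (rule power_mult_distrib)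
    finally show ?thesis .
  qed
  have lin2: "\<And>A Q B N R::real. A + Q \<ge> B - N \<Longrightarrow> Q \<le> R \<Longrightarrow> B - A \<le> N + R" by linarith
  have "2*a*q - 2*a* s \<le> n^2 + K^2*n^2" by (rule lin2[OF main s2])
  moreover have "2*a*(q-s) = 2*a*q - 2*a* s" by (simp add: right_diff_distrib)
  moreover have "(1+K^2)*n*n = n^2 + K^2*n^2" by (simp add: power2_eq_square distrib_right)
  ultimately have "2*a*(q - s) \<le> (1+K^2)*n*n" by simp
  also have "\<dots> \<le> (2*a*e)*n"
  proof -
    have "(1+K^2)*n \<le> 2*a*e" using ne unfolding K_def by (simp only: mult.commute)
    thus ?thesis using n by (intro mult_right_mono) auto
  qed
  also have "(2*a*e)*n = 2*a*(e*n)" by (simp only: mult.assoc)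
  finally have X: "2*a*(q - s) \<le> 2*a*(e*n)" .
  have "q - s \<le> e*n" using mult_left_le_imp_le[OF X] a by simp
  thus ?thesis by simp
qed

lemma closed_epi:
  fixes U :: "'z::metric_space \<Rightarrow> ereal"
  assumes LSC: "\<And>z c. ereal c < U z \<Longrightarrow> \<exists>d>0. \<forall>z'. dist z' z < d \<longrightarrow> ereal c < U z'"
  shows "closed (epi U)"
  unfolding closed_def open_dist
proof (intro ballI)
  fix w assume "w \<in> - epi U"
  then obtain z r where w: "w = (z, r)" and zr: "ereal r < U z" by (cases w) (auto simp: epi_def not_le)
  obtain c where c: "r < c" "ereal c < U z"
  proof (cases "U z")
    case (real u)
    thus ?thesis using that[of "(r+u)/2"] zr by auto
  next
    case PInf thus ?thesis using that[of "r+1"] by auto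
  next
    case MInf thus ?thesis using zr by auto
  qed
  obtain d where d: "d > 0" "\<forall>z'. dist z' z < d \<longrightarrow> ereal c < U z'" using LSC[OF c(2)] by blast
  show "\<exists>e>0. \<forall>y. dist y w < e \<longrightarrow> y \<in> - epi U"
  proof (intro exI[of _ "min d (c - r)"] conjI allI impI)
    show "min d (c - r) > 0" using d c by simp
    fix y assume y: "dist y w < min d (c - r)"
    obtain z' r' where yy: "y = (z', r')" by (cases y)
    have "dist z' z \<le> dist y w" using dist_fst_le[of y w] by (simp add: yy w)
    hence cU: "ereal c < U z'" using d y by simp
    have "dist r' r \<le> dist y w" using dist_snd_le[of y w] by (simp add: yy w)
    hence "\<bar>r' - r\<bar> < c - r" using y by (simp add: dist_real_def)
    hence "r' < c" by linarith
    hence "ereal r' < ereal c" by simp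
    hence "ereal r' < U z'" using cU by (rule less_trans)
    thus "y \<in> - epi U" by (simp add: yy epi_def not_le)
  qed
qed

lemma lsc_lower_bound:
  fixes U :: "'z::metric_space \<Rightarrow> ereal"
  assumes LSC: "\<And>z c. ereal c < U z \<Longrightarrow> \<exists>d>0. \<forall>z'. dist z' z < d \<longrightarrow> ereal c < U z'"
    and nm: "\<And>z. U z \<noteq> -\<infinity>" and K: "compact K"
  shows "\<exists>m. \<forall>z\<in>K. ereal m \<le> U z"
proof -
  define f where "f n = {z. ereal (- real n) < U z}" for n :: nat
  have op: "open (f n)" for n
    unfolding open_dist f_def
  proof (intro ballI)
    fix z assume "z \<in> {z. ereal (- real n) < U z}"
    then obtain d where "d > 0" "\<forall>z'. dist z' z < d \<longrightarrow> ereal (- real n) < U z'" using LSC by blast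
    thus "\<exists>e>0. \<forall>y. dist y z < e \<longrightarrow> y \<in> {z. ereal (- real n) < U z}" by auto
  qed
  have cov: "K \<subseteq> (\<Union>n\<in>UNIV. f n)"
  proof
    fix z assume "z \<in> K"
    show "z \<in> (\<Union>n\<in>UNIV. f n)"
    proof (cases "U z")
      case (real u)
      obtain n :: nat where "real n > - u" using reals_Archimedean2 by blast
      hence "z \<in> f n" using real by (simp add: f_def)
      thus ?thesis by blast
    next
      case PInf thus ?thesis by (auto simp: f_def)
    next
      case MInf thus ?thesis using nm by auto
    qed
  qed
  have "\<exists>C. finite C \<and> K \<subseteq> (\<Union>n\<in>C. f n)"
  proof (rule compactE_image[OF K, of UNIV f])
    show "\<And>n. n \<in> UNIV \<Longrightarrow> open (f n)" using op by simp
    show "K \<subseteq> \<Union>(f ` UNIV)" using cov by simp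
    fix C' assume "C' \<subseteq> UNIV" "finite C'" "K \<subseteq> \<Union>(f ` C')"
    thus "\<exists>C. finite C \<and> K \<subseteq> (\<Union>n\<in>C. f n)" by blast
  qed
  then obtain C where C: "finite C" "K \<subseteq> (\<Union>n\<in>C. f n)" by blast
  define N where "N = Max (insert 0 C)"
  show ?thesis
  proof (intro exI[of _ "- real N"] ballI)
    fix z assume "z \<in> K"
    then obtain n where n: "n \<in> C" "ereal (- real n) < U z" using C by (auto simp: f_def)
    have "n \<le> N" using n C by (simp add: N_def)
    hence "ereal (- real N) \<le> ereal (- real n)" by simp
    thus "ereal (- real N) \<le> U z" using n(2) by (rule order.trans[OF _ less_imp_le])
  qed
qed

lemma norm_add_sq: "(norm (x + h))^2 = (norm x)^2 + 2 * inner x h + (norm (h::'a::real_inner))^2"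
  by (simp add: power2_norm_eq_inner inner_add_left inner_add_right inner_commute)

lemma norm_diff_sq: "(norm (x - h))^2 = (norm x)^2 - 2 * inner x h + (norm (h::'a::real_inner))^2"
  by (simp add: power2_norm_eq_inner inner_diff_left inner_diff_right inner_commute)

lemma norm_pair_sq: "(norm (a, b))^2 = (norm a)^2 + (norm b)^2"
  by (simp add: norm_Pair)

lemma horiz_approx:
  fixes U :: "'z::euclidean_space \<Rightarrow> ereal" and y :: 'z
  assumes LSC: "\<And>z c. ereal c < U z \<Longrightarrow> \<exists>d>0. \<forall>z'. dist z' z < d \<longrightarrow> ereal c < U z'"
    and nm: "\<And>z. U z \<noteq> -\<infinity>" and u0: "U z0 = ereal u0"
    and reg: "\<And>\<epsilon>. \<epsilon>>0 \<Longrightarrow> \<exists>\<delta>>0. \<forall>w\<in>epi U. norm (w - (z0,u0)) < \<delta> \<longrightarrow>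
                 inner (y, 0::real) (w - (z0,u0)) \<le> \<epsilon> * norm (w - (z0,u0))"
    and \<epsilon>0: "\<epsilon>0 > 0"
  shows "\<exists>z p \<mu>. U z \<noteq> \<infinity> \<and> norm (z - z0) < \<epsilon>0 \<and> 0 < \<mu> \<and> \<mu> < \<epsilon>0 \<and>
           norm (\<mu> *\<^sub>R p - y) < \<epsilon>0 \<and> p \<in> subdiff U z"
proof -
  obtain m where m: "\<forall>z\<in>cball z0 1. ereal m \<le> U z"
    using lsc_lower_bound[OF LSC nm compact_cball] by blast
  have "ereal m \<le> U z0" using m by simp
  hence mu0: "m \<le> u0" using u0 by simp
  define M where "M = u0 - m"
  have M0: "M \<ge> 0" using mu0 by (simp add: M_def)
  define \<beta> where "\<beta> = min (\<epsilon>0/2) (1/4)"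
  have \<beta>: "\<beta> > 0" "\<beta> \<le> \<epsilon>0/2" "\<beta> \<le> 1/4" using \<epsilon>0 by (auto simp: \<beta>_def)
  define \<epsilon> where "\<epsilon> = \<beta>/4"
  define \<eta> where "\<eta> = \<beta>^2/(4*(M+1))"
  have \<eta>: "\<eta> > 0" unfolding \<eta>_def using \<beta> M0 by (intro divide_pos_pos) auto
  have \<eta>M: "\<eta>*M \<ge> 0" using \<eta> M0 by simp
  obtain \<delta> where \<delta>: "\<delta> > 0" "\<forall>w\<in>epi U. norm (w - (z0,u0)) < \<delta> \<longrightarrow>
                 inner (y, 0::real) (w - (z0,u0)) \<le> \<epsilon> * norm (w - (z0,u0))"
    using reg[of \<epsilon>] \<beta> by (auto simp: \<epsilon>_def)
  define K0 where "K0 = 2*norm y + 1 + 2*(\<eta>*M)"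
  have K0: "K0 > 0" unfolding K0_def using \<eta>M norm_ge_zero[of y] by linarith
  define \<tau> where "\<tau> = min (1/2) (min (\<delta>/(2*K0)) (\<epsilon>0/(2*\<eta>+1)))"
  have d2: "2*\<eta>+1 > 0" using \<eta> by linarith
  have \<tau>0: "\<tau> > 0" using \<delta> K0 d2 \<epsilon>0 by (simp add: \<tau>_def)
  have \<tau>1: "\<tau> \<le> 1/2" unfolding \<tau>_def by (rule min.cobounded1)
  have \<tau>2: "\<tau> \<le> \<delta>/(2*K0)" unfolding \<tau>_def by (rule min.coboundedI2) (rule min.cobounded1)
  have \<tau>3: "\<tau> \<le> \<epsilon>0/(2*\<eta>+1)" unfolding \<tau>_def by (rule min.coboundedI2) (rule min.cobounded2)
  have \<tau>K: "\<tau>*K0 < \<delta>"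
  proof -
    note \<tau>2
    hence "\<tau>*K0 \<le> \<delta>/(2*K0)*K0" using K0 by (intro mult_right_mono) auto
    also have "\<dots> = \<delta>/2" using K0 by simp
    finally show ?thesis using \<delta> by linarith
  qed
  have \<tau>\<eta>: "\<tau>*\<eta> < \<epsilon>0/2"
  proof -
    note \<tau>3
    hence "\<tau>*\<eta> \<le> \<epsilon>0/(2*\<eta>+1)*\<eta>" using \<eta> by (intro mult_right_mono) auto
    also have "\<dots> = (\<epsilon>0*\<eta>)/(2*\<eta>+1)" by simp
    also have "\<dots> < \<epsilon>0/2" using d2 \<epsilon>0 by (simp add: divide_less_eq algebra_simps)
    finally show ?thesis .
  qed
  define lam where "lam = \<tau>*\<eta>"
  have lam: "lam > 0" using \<tau>0 \<eta> by (simp add: lam_def)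
  define \<Psi> where "\<Psi> = (\<lambda>w::'z\<times>real. (norm (fst w - z0 - \<tau> *\<^sub>R y))^2 + 2*\<tau>*lam*(snd w - u0) + (max (snd w - u0) 0)^2)"
  define C where "C = epi U \<inter> (cball z0 1 \<times> {m..u0+1})"
  have Ccomp: "compact C" unfolding C_def
    by (intro closed_Int_compact closed_epi[OF LSC] compact_Times compact_cball compact_Icc)
  have w0C: "(z0,u0) \<in> C" using u0 mu0 by (simp add: C_def epi_def)
  have \<Psi>cont: "continuous_on C \<Psi>" unfolding \<Psi>_def by (intro continuous_intros)
  obtain wm where wm: "wm \<in> C" "\<forall>w\<in>C. \<Psi> wm \<le> \<Psi> w"
    using continuous_attains_inf[OF Ccomp _ \<Psi>cont] w0C by blast
  obtain zt rt where wmd: "wm = (zt, rt)" by (cases wm)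
  have zt: "U zt \<le> ereal rt" "dist z0 zt \<le> 1" "m \<le> rt" "rt \<le> u0 + 1"
    using wm(1) by (auto simp: wmd C_def epi_def)
  define D where "D = zt - z0"
  define R where "R = rt - u0"
  define Rp where "Rp = max R 0"
  have Rp0: "Rp \<ge> 0" by (simp add: Rp_def)
  have RRp: "R \<le> Rp" by (simp add: Rp_def)
  have RM: "R \<ge> -M" using zt(3) by (simp add: R_def M_def)
  have \<Psi>0: "\<Psi> (z0,u0) = \<tau>^2 * (norm y)^2" using \<tau>0 by (simp add: \<Psi>_def power_mult_distrib)
  have ND: "(norm (D - \<tau> *\<^sub>R y))^2 = (norm D)^2 - 2*\<tau>*inner D y + \<tau>^2*(norm y)^2"
    using \<tau>0 by (simp add: norm_diff_sq power_mult_distrib)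
  have \<Psi>t: "\<Psi> (zt,rt) = (norm D)^2 - 2*\<tau>*inner D y + \<tau>^2*(norm y)^2 + 2*\<tau>*lam*R + Rp^2"
  proof -
    have arg: "fst (zt, rt) - z0 - \<tau> *\<^sub>R y = D - \<tau> *\<^sub>R y" by (simp add: D_def)
    have "\<Psi> (zt,rt) = (norm (D - \<tau> *\<^sub>R y))^2 + 2*\<tau>*lam*R + Rp^2"
      unfolding \<Psi>_def by (simp only: arg snd_conv R_def Rp_def)
    thus ?thesis by (simp only: ND)
  qed
  have "\<Psi> (zt,rt) \<le> \<Psi> (z0,u0)" using wm w0C by (simp add: wmd)
  hence min0: "(norm D)^2 + Rp^2 \<le> 2*\<tau>*inner D y - 2*\<tau>*lam*R" unfolding \<Psi>t \<Psi>0 by linarith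
  have "2*\<tau>*lam*(-M) \<le> 2*\<tau>*lam*R" using RM \<tau>0 lam by (intro mult_left_mono) auto
  moreover have "2*\<tau>*lam*(-M) = -(2*\<tau>^2*\<eta>*M)" by (simp add: lam_def power2_eq_square)
  ultimately have lamR: "- (2*\<tau>*lam*R) \<le> 2*\<tau>^2*\<eta>*M" by linarith
  define X where "X = norm (D, Rp)"
  have X0: "X \<ge> 0" by (simp add: X_def)
  have Xsq: "X^2 = (norm D)^2 + Rp^2" by (simp add: X_def norm_pair_sq)
  have E1: "X^2 \<le> 2*\<tau>*inner D y + 2*\<tau>^2*\<eta>*M"
    using min0 lamR Xsq by linarith
  have nDX: "norm D \<le> X" using norm_fst_le[of D Rp] by (simp add: X_def)
  have RpX: "Rp \<le> X" using norm_snd_le[of Rp D] Rp0 by (simp add: X_def)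
  have "inner D y \<le> norm D * norm y" by (rule norm_cauchy_schwarz)
  also have "\<dots> \<le> X * norm y" using nDX by (intro mult_right_mono) auto
  finally have iX: "inner D y \<le> norm y * X" by (simp add: mult.commute)
  have i1: "2*\<tau>*inner D y \<le> 2*\<tau>*norm y*X"
    using mult_left_mono[OF iX, of "2*\<tau>"] \<tau>0 by (simp add: mult.assoc)
  have "X^2 \<le> 2*\<tau>*norm y*X + 2*\<tau>^2*(\<eta>*M)"
    using E1 i1 by (simp add: mult.assoc)
  hence apr0: "X \<le> \<tau>*(2*norm y + 1 + 2*(\<eta>*M))" by (rule A3[OF X0 \<tau>0 norm_ge_zero \<eta>M])
  hence apr: "X \<le> \<tau>*K0" by (simp add: K0_def)
  have inE': "(zt, u0 + Rp) \<in> epi U"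
  proof -
    have "ereal rt \<le> ereal (u0 + Rp)" using RRp by (simp add: R_def)
    with zt(1) have "U zt \<le> ereal (u0 + Rp)" by (rule order_trans)
    thus ?thesis by (simp add: epi_def)
  qed
  have nX: "norm ((zt, u0 + Rp) - (z0, u0)) = X" by (simp add: X_def D_def)
  hence "norm ((zt, u0 + Rp) - (z0, u0)) < \<delta>" using apr \<tau>K by linarith
  hence "inner (y, 0::real) ((zt, u0 + Rp) - (z0, u0)) \<le> \<epsilon> * norm ((zt, u0 + Rp) - (z0, u0))"
    using \<delta>(2) inE' by blast
  hence iDy: "inner D y \<le> \<epsilon> * X" unfolding nX by (simp add: D_def inner_commute inner_Pair)
  have i2: "2*\<tau>*inner D y \<le> 2*\<tau>*\<epsilon>*X"
    using mult_left_mono[OF iDy, of "2*\<tau>"] \<tau>0 by (simp add: mult.assoc)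
  have "X^2 \<le> 2*\<tau>*(\<beta>/4)*X + 2*\<tau>^2*(\<beta>^2/(4*(M+1)))*M"
    using E1 i2 unfolding \<epsilon>_def \<eta>_def by linarith
  hence Xb: "X \<le> \<tau>*\<beta>" by (rule A4[OF X0 \<tau>0 \<beta>(1) M0])
  have \<tau>\<beta>: "\<tau>*\<beta> \<le> 1/8"
  proof -
    have "\<tau>*\<beta> \<le> (1/2)*(1/4)" using \<tau>1 \<beta> \<tau>0 by (intro mult_mono) auto
    thus ?thesis by simp
  qed
  have \<tau>\<beta>2: "\<tau>*\<beta> \<le> \<beta>"
  proof -
    have "\<tau>*\<beta> \<le> 1*\<beta>" using \<tau>1 \<beta> by (intro mult_right_mono) auto
    thus ?thesis by simp
  qed
  have nD: "norm D \<le> \<tau>*\<beta>" using nDX Xb by linarith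
  have Rpb: "Rp \<le> \<tau>*\<beta>" using RpX Xb by linarith
  have rt_eq: "U zt = ereal rt"
  proof (rule ccontr)
    assume ne: "U zt \<noteq> ereal rt"
    have mz: "ereal m \<le> U zt" using m zt(2) by simp
    then obtain r' where r': "U zt = ereal r'" using zt(1) nm[of zt] by (cases "U zt") auto
    have rr: "r' < rt" using ne zt(1) r' by simp
    have "(zt, r') \<in> C" using wm(1) r' rr mz by (auto simp: wmd C_def epi_def)
    hence "\<Psi> (zt, rt) \<le> \<Psi> (zt, r')" using wm(2) by (simp add: wmd)
    moreover have "\<Psi> (zt, r') < \<Psi> (zt, rt)"
    proof -
      have A: "2*\<tau>*lam*(r' - u0) < 2*\<tau>*lam*(rt - u0)" using rr \<tau>0 lam
        by (intro mult_strict_left_mono) auto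
      have B: "(max (r' - u0) 0)^2 \<le> (max (rt - u0) 0)^2"
        using rr by (intro power_mono) auto
      show ?thesis unfolding \<Psi>_def by (simp only: fst_conv snd_conv) (use A B in linarith)
    qed
    ultimately show False by simp
  qed
  define \<mu> where "\<mu> = lam + Rp/\<tau>"
  have \<mu>0: "\<mu> > 0" unfolding \<mu>_def using lam Rp0 \<tau>0 by (simp add: add_pos_nonneg)
  define a where "a = \<tau>*\<mu>"
  have a0: "a > 0" using \<tau>0 \<mu>0 by (simp add: a_def)
  have a_eq: "a = \<tau>*lam + Rp" using \<tau>0 by (simp add: a_def \<mu>_def distrib_left)
  define p where "p = (1/a) *\<^sub>R (\<tau> *\<^sub>R y - D)"
  have ap: "a *\<^sub>R p = \<tau> *\<^sub>R y - D" using a0 by (simp add: p_def)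
  have \<mu>p: "\<mu> *\<^sub>R p - y = - ((1/\<tau>) *\<^sub>R D)"
  proof -
    have "\<mu> *\<^sub>R p = (1/\<tau>) *\<^sub>R (a *\<^sub>R p)" using \<tau>0 by (simp add: a_def)
    also have "\<dots> = (1/\<tau>) *\<^sub>R (\<tau> *\<^sub>R y - D)" by (simp only: ap)
    also have "\<dots> = y - (1/\<tau>) *\<^sub>R D" using \<tau>0 by (simp add: scaleR_diff_right)
    finally show ?thesis by simp
  qed
  show ?thesis
  proof (rule exI[of _ zt], rule exI[of _ p], rule exI[of _ \<mu>], intro conjI)
    show "U zt \<noteq> \<infinity>" using rt_eq by simp
    show "norm (zt - z0) < \<epsilon>0" using nD \<tau>\<beta>2 \<beta> \<epsilon>0 unfolding D_def by linarith
    show "0 < \<mu>" by (rule \<mu>0)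
    show "\<mu> < \<epsilon>0"
    proof -
      have "Rp/\<tau> \<le> \<beta>" using Rpb \<tau>0 by (simp add: divide_le_eq mult.commute)
      thus ?thesis using \<tau>\<eta> \<beta> by (simp add: \<mu>_def lam_def)
    qed
    have nmu: "norm (\<mu> *\<^sub>R p - y) = norm D / \<tau>" using \<tau>0 by (simp add: \<mu>p)
    have "norm D / \<tau> \<le> \<beta>" using nD \<tau>0 by (simp add: divide_le_eq mult.commute)
    thus "norm (\<mu> *\<^sub>R p - y) < \<epsilon>0" unfolding nmu using \<beta> \<epsilon>0 by linarith
    show "p \<in> subdiff U zt"
    proof (rule fre_subdiff[of U zt rt, OF rt_eq])
      fix e :: real assume e: "e > 0"
      define P where "P = norm p"
      have P0: "P \<ge> 0" by (simp add: P_def)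
      define K where "K = 2*P+1"
      obtain d1 where d1: "d1 > 0" "\<forall>z'. dist z' zt < d1 \<longrightarrow> ereal (rt - a) < U z'"
        using LSC[of "rt - a" zt] rt_eq a0 by auto
      have K2: "1 + K^2 > 0" by (simp add: add_pos_nonneg)
      have P2: "2*(P+1) > 0" using P0 by (simp add: algebra_simps)
      define d where "d = min (min (1/2) a) (min d1 (min (2*a*e/(1+K^2)) (1/(2*(P+1)))))"
      have d0: "d > 0" using a0 d1 e K2 P2 by (simp add: d_def)
      show "\<exists>d>0. \<forall>h. norm h < d \<longrightarrow> ereal (rt + inner p h - e * norm h) \<le> U (zt + h)"
      proof (intro exI[of _ d] conjI allI impI d0)
        fix h :: 'z assume h: "norm h < d"
        define n where "n = norm h"
        define q where "q = inner p h"
        have n0: "n \<ge> 0" by (simp add: n_def)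
        have qb: "\<bar>q\<bar> \<le> P*n" unfolding q_def P_def n_def by (rule Cauchy_Schwarz_ineq2)
        have hd: "n < 1/2" "n < a" "n < d1" "n < 2*a*e/(1+K^2)" "n < 1/(2*(P+1))"
          using h by (auto simp: d_def n_def)
        have Pn: "P*n < 1/2"
        proof -
          have "P*n \<le> P*(1/(2*(P+1)))" using hd P0 by (intro mult_left_mono) auto
          also have "\<dots> = P/(2*(P+1))" by simp
          also have "\<dots> < 1/2" using P2 by (simp add: divide_less_eq)
          finally show ?thesis .
        qed
        have en: "e*n \<ge> 0" using e n0 by simp
        show "ereal (rt + inner p h - e * norm h) \<le> U (zt + h)"
        proof (cases "U (zt + h)")
          case PInf thus ?thesis by simp
        next
          case MInf thus ?thesis using nm by simp
        next
          case (real w)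
          define s where "s = w - rt"
          have "ereal (rt - a) < U (zt + h)" using d1(2) hd(3) by (simp add: dist_norm n_def)
          hence sk: "s > -a" using real by (simp add: s_def)
          have "s \<ge> q - e*n"
          proof (cases "w \<le> u0 + 1")
            case False
            have "rt \<le> u0 + 1/8" using Rpb \<tau>\<beta> RRp by (simp add: R_def)
            hence "s > 1/2" using False by (simp add: s_def)
            moreover have "q - e*n \<le> 1/2" using qb Pn en by linarith
            ultimately show ?thesis by linarith
          next
            case True
            have zh: "dist z0 (zt + h) \<le> 1"
            proof -
              have "dist z0 (zt + h) = norm ((zt + h) - z0)" by (simp add: dist_norm norm_minus_commute)
              also have "(zt + h) - z0 = D + h" by (simp add: D_def algebra_simps)
              also have "norm (D + h) \<le> norm D + norm h" by (rule norm_triangle_ineq)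
              finally show ?thesis using nD \<tau>\<beta> hd by (simp add: n_def)
            qed
            have "ereal m \<le> U (zt + h)" using m zh by simp
            hence "(zt + h, w) \<in> C" using True real zh by (simp add: C_def epi_def)
            hence le: "\<Psi> (zt, rt) \<le> \<Psi> (zt + h, w)" using wm(2) by (simp add: wmd)
            have arg1: "fst (zt + h, w) - z0 - \<tau> *\<^sub>R y = (D - \<tau> *\<^sub>R y) + h" by (simp add: D_def algebra_simps)
            have P1: "\<Psi> (zt + h, w) = (norm ((D - \<tau> *\<^sub>R y) + h))^2 + 2*\<tau>*lam*(w - u0) + (max (w - u0) 0)^2"
              unfolding \<Psi>_def by (simp only: arg1 snd_conv)
            have P1': "(norm ((D - \<tau> *\<^sub>R y) + h))^2 = (norm (D - \<tau> *\<^sub>R y))^2 + 2*inner (D - \<tau> *\<^sub>R y) h + n^2"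
              by (simp add: norm_add_sq n_def)
            have arg2: "fst (zt, rt) - z0 - \<tau> *\<^sub>R y = D - \<tau> *\<^sub>R y" by (simp add: D_def)
            have P2': "\<Psi> (zt, rt) = (norm (D - \<tau> *\<^sub>R y))^2 + 2*\<tau>*lam*(rt - u0) + Rp^2"
              unfolding \<Psi>_def by (simp only: arg2 snd_conv R_def Rp_def)
            have ia: "inner (D - \<tau> *\<^sub>R y) h = - (a * q)"
            proof -
              have "D - \<tau> *\<^sub>R y = - (a *\<^sub>R p)" using ap by simp
              thus ?thesis by (simp add: q_def)
            qed
            have b1: "(max (w - u0) 0)^2 - Rp^2 \<le> 2*Rp* s + s^2"
              using B1[of "w - u0" R] by (simp add: Rp_def R_def s_def)
            have ls: "2*\<tau>*lam*(w - u0) - 2*\<tau>*lam*(rt - u0) = 2*\<tau>*lam* s" by (simp add: s_def algebra_simps)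
            have "2*a*q - n^2 \<le> 2*\<tau>*lam* s + 2*Rp* s + s^2"
              using le P1 P1' P2' ia b1 ls by linarith
            moreover have "2*a* s = 2*\<tau>*lam* s + 2*Rp* s" by (simp add: a_eq algebra_simps)
            ultimately have main: "2*a* s + s^2 \<ge> 2*a*q - n^2" by linarith
            have ne: "n*(1+(2*P+1)^2) \<le> 2*a*e"
            proof -
              have "n*(1+K^2) \<le> 2*a*e/(1+K^2)*(1+K^2)" using hd n0 K2 by (intro mult_right_mono) auto
              thus ?thesis using K2 by (simp add: K_def)
            qed
            show ?thesis by (rule A2[OF a0 n0 P0 qb main sk order_refl less_imp_le[OF hd(2)] ne e])
          qed
          thus ?thesis using real by (simp add: s_def q_def n_def)
        qed
      qed
    qed
  qed
qed

lemma dist_triple_le: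
  fixes t t' :: real and x x' P P' :: "'a::real_normed_vector"
  shows "dist (t', x', P') (t, x, P) \<le> norm ((t', x') - (t, x)) + norm ((t', x') - (t, x)) + norm (P' - P)"
proof -
  have "dist (t', x', P') (t, x, P) = norm (t' - t, x' - x, P' - P)" by (simp add: dist_norm)
  also have "\<dots> \<le> norm (t' - t) + norm (x' - x, P' - P)" by (rule norm_pair_le)
  also have "norm (x' - x, P' - P) \<le> norm (x' - x) + norm (P' - P)" by (rule norm_pair_le)
  also have "norm (t' - t) \<le> norm ((t', x') - (t, x))" using norm_fst_le[of "t' - t" "x' - x"] by simp
  also have "norm (x' - x) \<le> norm ((t', x') - (t, x))" using norm_snd_le[of "x' - x" "t' - t"] by simp
  finally show ?thesis by simp
qed

lemma horiz_final:
  fixes H :: "real \<Rightarrow> 'a::euclidean_space \<Rightarrow> 'a \<Rightarrow> real"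
  assumes H1: "continuous_on ({0..T} \<times> UNIV \<times> UNIV) (\<lambda>(t, x, p). H t x p)"
    and H2: "\<And>t x. t \<in> {0..T} \<Longrightarrow> convex_on UNIV (H t x)"
    and t0: "t \<in> {0..T}"
    and approx: "\<And>\<epsilon>. \<epsilon> > 0 \<Longrightarrow> \<exists>t' x' pt px \<mu>. t' \<in> {0..T} \<and> norm ((t', x') - (t, x)) < \<epsilon> \<and> 0 < \<mu> \<and> \<mu> < \<epsilon>
        \<and> norm (\<mu> *\<^sub>R (pt, px) - (nt, nx)) < \<epsilon> \<and> - pt + H t' x' (- px) \<le> 0"
    and S: "S > 0"
  shows "S * nt \<ge> H t x (- (S *\<^sub>R nx)) - H t x 0"
proof -
  define H1v where "H1v = H t x (- (S *\<^sub>R nx))"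
  define H0 where "H0 = H t x 0"
  have key: "S * nt \<ge> H1v - H0 - e" if e: "e > 0" for e
  proof -
    define f where "f = e/4"
    have e4: "f > 0" using e by (simp add: f_def)
    have ef: "e = 4*f" by (simp add: f_def)
    obtain d1 where d1: "d1 > 0" "\<forall>w\<in>{0..T} \<times> UNIV \<times> UNIV. dist w (t, x, - (S *\<^sub>R nx)) < d1 \<longrightarrow>
         dist ((\<lambda>(t, x, p). H t x p) w) ((\<lambda>(t, x, p). H t x p) (t, x, - (S *\<^sub>R nx))) < f"
      using H1 t0 e4 unfolding continuous_on_iff by (metis SigmaI UNIV_I)
    obtain d2 where d2: "d2 > 0" "\<forall>w\<in>{0..T} \<times> UNIV \<times> UNIV. dist w (t, x, 0) < d2 \<longrightarrow>
         dist ((\<lambda>(t, x, p). H t x p) w) ((\<lambda>(t, x, p). H t x p) (t, x, 0)) < f"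
      using H1 t0 e4 unfolding continuous_on_iff by (metis SigmaI UNIV_I)
    define \<epsilon> where "\<epsilon> = min (min (1/S) (d1/(S+3))) (min (d2/3) (e/(4*S*(\<bar>H0\<bar>+1))))"
    have den: "4*S*(\<bar>H0\<bar>+1) > 0" using S by (simp add: add_pos_nonneg)
    have \<epsilon>0: "\<epsilon> > 0" using S d1 d2 e den by (simp add: \<epsilon>_def)
    have \<epsilon>S: "\<epsilon> \<le> 1/S" "\<epsilon> \<le> d1/(S+3)" "\<epsilon> \<le> d2/3" "\<epsilon> \<le> e/(4*S*(\<bar>H0\<bar>+1))"
      unfolding \<epsilon>_def
      apply (rule min.coboundedI1, rule min.cobounded1)
      apply (rule min.coboundedI1, rule min.cobounded2)
      apply (rule min.coboundedI2, rule min.cobounded1)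
      by (rule min.coboundedI2, rule min.cobounded2)
    obtain t' x' pt px \<mu> where A: "t' \<in> {0..T}" "norm ((t', x') - (t, x)) < \<epsilon>" "0 < \<mu>" "\<mu> < \<epsilon>"
        "norm (\<mu> *\<^sub>R (pt, px) - (nt, nx)) < \<epsilon>" "- pt + H t' x' (- px) \<le> 0"
      using approx[OF \<epsilon>0] by blast
    define qt where "qt = \<mu> * pt"
    define qx where "qx = \<mu> *\<^sub>R px"
    have qd: "\<mu> *\<^sub>R (pt, px) - (nt, nx) = (qt - nt, qx - nx)" by (simp add: qt_def qx_def)
    have qt_b: "\<bar>qt - nt\<bar> < \<epsilon>" using A(5) norm_fst_le[of "qt - nt" "qx - nx"] unfolding qd by simp
    have qx_b: "norm (qx - nx) < \<epsilon>" using A(5) norm_snd_le[of "qx - nx" "qt - nt"] unfolding qd by simp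
    define lam where "lam = S * \<mu>"
    have lam0: "0 \<le> lam" "lam \<le> 1"
    proof -
      show "0 \<le> lam" using S A(3) by (simp add: lam_def)
      have "S * \<mu> \<le> S * (1/S)" using A(4) \<epsilon>S(1) S by (intro mult_left_mono) auto
      thus "lam \<le> 1" using S by (simp add: lam_def)
    qed
    have cvx: "H t' x' ((1 - lam) *\<^sub>R 0 + lam *\<^sub>R (- px)) \<le> (1 - lam) * H t' x' 0 + lam * H t' x' (- px)"
      using convex_onD[OF H2[of t' x', OF A(1)] lam0(1) lam0(2), of 0 "- px"] by simp
    have arg: "(1 - lam) *\<^sub>R 0 + lam *\<^sub>R (- px) = - (S *\<^sub>R qx)" by (simp add: lam_def qx_def)
    have "lam * H t' x' (- px) \<le> lam * pt" using A(6) lam0 by (intro mult_left_mono) auto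
    also have "lam * pt = S * qt" by (simp add: lam_def qt_def)
    finally have c1: "H t' x' (- (S *\<^sub>R qx)) \<le> (1 - lam) * H t' x' 0 + S * qt"
      using cvx unfolding arg by linarith
    have "dist (t', x', - (S *\<^sub>R qx)) (t, x, - (S *\<^sub>R nx)) \<le> \<epsilon> + \<epsilon> + norm (- (S *\<^sub>R qx) - - (S *\<^sub>R nx))"
      using dist_triple_le[of t' x' "- (S *\<^sub>R qx)" t x "- (S *\<^sub>R nx)"] A(2) by linarith
    also have "norm (- (S *\<^sub>R qx) - - (S *\<^sub>R nx)) = S * norm (qx - nx)"
      using S by (simp add: scaleR_diff_right[symmetric] norm_minus_commute)
    also have "S * norm (qx - nx) \<le> S * \<epsilon>" using qx_b S by (intro mult_left_mono) auto
    finally have "dist (t', x', - (S *\<^sub>R qx)) (t, x, - (S *\<^sub>R nx)) \<le> (S+2) * \<epsilon>" by (simp add: algebra_simps)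
    also have "(S+2) * \<epsilon> < d1"
    proof -
      have "(S+2) * \<epsilon> < (S+3) * \<epsilon>" using \<epsilon>0 by simp
      also have "\<dots> \<le> (S+3) * (d1/(S+3))" using \<epsilon>S(2) S by (intro mult_left_mono) auto
      also have "\<dots> = d1" using S by simp
      finally show ?thesis .
    qed
    finally have "\<bar>H t' x' (- (S *\<^sub>R qx)) - H1v\<bar> < f"
      using d1(2) A(1) by (auto simp: H1v_def dist_real_def)
    hence c2: "H t' x' (- (S *\<^sub>R qx)) > H1v - f" by linarith
    have "dist (t', x', 0::'a) (t, x, 0) \<le> \<epsilon> + \<epsilon> + norm ((0::'a) - 0)"
      using dist_triple_le[of t' x' "0::'a" t x 0] A(2) by linarith
    also have "\<dots> < d2" using \<epsilon>S(3) \<epsilon>0 by simp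
    finally have "\<bar>H t' x' 0 - H0\<bar> < f"
      using d2(2) A(1) by (auto simp: H0_def dist_real_def)
    hence c3: "H t' x' 0 < H0 + f" by linarith
    have "(1 - lam) * H t' x' 0 \<le> (1 - lam) * (H0 + f)" using c3 lam0 by (intro mult_left_mono) auto
    also have "\<dots> = H0 + f - lam * H0 - lam * (f)" by (simp add: field_simps)
    also have "\<dots> \<le> H0 + f + lam * \<bar>H0\<bar>"
    proof -
      have "lam * (- H0) \<le> lam * \<bar>H0\<bar>" using lam0 by (intro mult_left_mono) auto
      hence "- (lam * H0) \<le> lam * \<bar>H0\<bar>" by simp
      moreover have "lam * (f) \<ge> 0" using lam0 e4 by simp
      ultimately show ?thesis by linarith
    qed
    finally have c4: "(1 - lam) * H t' x' 0 \<le> H0 + f + lam * \<bar>H0\<bar>" .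
    have small: "S * \<epsilon> * (\<bar>H0\<bar> + 1) \<le> f"
    proof -
      have "S * \<epsilon> * (\<bar>H0\<bar> + 1) \<le> S * (e/(4*S*(\<bar>H0\<bar>+1))) * (\<bar>H0\<bar> + 1)"
        using \<epsilon>S(4) S by (intro mult_right_mono mult_left_mono) auto
      also have "\<dots> = f" using S den by (simp add: field_simps f_def)
      finally show ?thesis .
    qed
    have l1: "lam * \<bar>H0\<bar> \<le> S * \<epsilon> * \<bar>H0\<bar>"
      using A(4) S by (simp add: lam_def mult_right_mono)
    have l2: "S * \<bar>qt - nt\<bar> \<le> S * \<epsilon>" using qt_b S by simp
    have l3: "S * \<epsilon> * \<bar>H0\<bar> + S * \<epsilon> = S * \<epsilon> * (\<bar>H0\<bar> + 1)" by (simp add: algebra_simps)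
    have l4: "S * qt - S * nt \<le> S * \<bar>qt - nt\<bar>"
    proof -
      have "S * (qt - nt) \<le> S * \<bar>qt - nt\<bar>" using S by (intro mult_left_mono) auto
      thus ?thesis by (simp add: algebra_simps)
    qed
    show ?thesis using c1 c2 c4 small l1 l2 l3 l4 ef e4 by linarith
  qed
  show ?thesis
  proof (rule ccontr)
    assume "\<not> ?thesis"
    hence "H1v - H0 - S * nt > 0" by (simp add: H1v_def H0_def)
    then obtain g where g: "g = H1v - H0 - S * nt" "g > 0" by blast
    hence "S * nt \<ge> H1v - H0 - g/2" using key by simp
    thus False using g by linarith
  qed
qed

theorem proposition5p7:
  fixes T :: real
    and U :: "real \<times> 'a::euclidean_space \<Rightarrow> ereal"
    and H :: "real \<Rightarrow> 'a \<Rightarrow> 'a \<Rightarrow> real"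
  assumes U_outside: "\<And>t x. t \<notin> {0..T} \<Longrightarrow> U (t, x) = \<infinity>"
    and U_proper: "proper_fun U"
    and U_lsc: "lsc_on ({0..T} \<times> UNIV) U"
    and H1: "continuous_on ({0..T} \<times> UNIV \<times> UNIV) (\<lambda>(t, x, p). H t x p)"
    and H2: "\<And>t x. t \<in> {0..T} \<Longrightarrow> convex_on UNIV (H t x)"
    and HJ: "\<And>t x pt px. (t, x) \<in> edom U \<Longrightarrow> t \<in> {0<..T} \<Longrightarrow>
               (pt, px) \<in> subdiff U (t, x) \<Longrightarrow> - pt + H t x (- px) \<le> 0"
  shows "\<forall>t x nt nx nu v. (t, x) \<in> edom U \<and> t \<in> {0<..T}
           \<and> ((nt, nx), nu) \<in> normal_cone (epi U) ((t, x), real_of_ereal (U (t, x)))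
           \<and> v \<in> edom (conj_H H t x)
           \<longrightarrow> nt + inner v nx - nu * real_of_ereal (conj_H H t x v) \<ge> 0"
proof (intro allI impI)
  fix t x nt nx nu v
  assume A: "(t, x) \<in> edom U \<and> t \<in> {0<..T}
           \<and> ((nt, nx), nu) \<in> normal_cone (epi U) ((t, x), real_of_ereal (U (t, x)))
           \<and> v \<in> edom (conj_H H t x)"
  have dom: "(t, x) \<in> edom U" and tT: "t \<in> {0<..T}"
    and NC: "((nt, nx), nu) \<in> normal_cone (epi U) ((t, x), real_of_ereal (U (t, x)))"
    and vdom: "v \<in> edom (conj_H H t x)" using A by auto
  obtain u0 where u0: "U (t, x) = ereal u0" using dom by (cases "U (t, x)") (auto simp: edom_def)
  have NC': "((nt, nx), nu) \<in> normal_cone (epi U) ((t, x), u0)" using NC u0 by simp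
  obtain l where l: "conj_H H t x v = ereal l" using vdom by (cases "conj_H H t x v") (auto simp: edom_def)
  have Lb: "inner v P - H t x P \<le> l" for P
  proof -
    have "ereal (inner v P - H t x P) \<le> conj_H H t x v" unfolding conj_H_def by (rule SUP_upper) simp
    thus ?thesis by (simp add: l)
  qed
  define S0 where "S0 = {0..T} \<times> (UNIV :: 'a set)"
  have out: "\<And>z. z \<notin> S0 \<Longrightarrow> U z = \<infinity>"
  proof -
    fix z :: "real \<times> 'a" assume "z \<notin> S0"
    thus "U z = \<infinity>" using U_outside by (cases z) (auto simp: S0_def)
  qed
  have cS: "closed S0" by (simp add: S0_def closed_Times)
  have lS: "lsc_on S0 U" using U_lsc by (simp add: S0_def)
  have LSC: "\<And>z c. ereal c < U z \<Longrightarrow> \<exists>d>0. \<forall>z'. dist z' z < d \<longrightarrow> ereal c < U z'"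
    using lsc_pt[of S0 U, OF out cS lS] by blast
  have nm: "\<And>z. U z \<noteq> -\<infinity>" using U_proper unfolding proper_fun_def by blast
  have nu0: "nu \<le> 0" using nu_nonpos[OF NC'] u0 by simp
  have reg: "\<And>\<epsilon>. \<epsilon>>0 \<Longrightarrow> \<exists>\<delta>>0. \<forall>w\<in>epi U. norm (w - ((t, x), u0)) < \<delta> \<longrightarrow>
                 inner ((nt, nx), nu) (w - ((t, x), u0)) \<le> \<epsilon> * norm (w - ((t, x), u0))"
    using reg_normal[OF NC'] by blast
  have t0: "t \<in> {0..T}" "t > 0" using tT by auto
  show "nt + inner v nx - nu * real_of_ereal (conj_H H t x v) \<ge> 0"
  proof (cases "nu < 0")
    case True
    define \<mu> where "\<mu> = - nu"
    have \<mu>0: "\<mu> > 0" using True by (simp add: \<mu>_def)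
    have "(1/(-nu)) *\<^sub>R (nt, nx) \<in> subdiff U (t, x)"
      by (rule nonhoriz_subgrad[OF LSC u0 reg True])
    hence "((1/\<mu>) * nt, (1/\<mu>) *\<^sub>R nx) \<in> subdiff U (t, x)" by (simp add: \<mu>_def)
    hence hj: "- ((1/\<mu>) * nt) + H t x (- ((1/\<mu>) *\<^sub>R nx)) \<le> 0" using HJ dom tT by blast
    have lb: "inner v (- ((1/\<mu>) *\<^sub>R nx)) - H t x (- ((1/\<mu>) *\<^sub>R nx)) \<le> l" by (rule Lb)
    have "0 \<le> (1/\<mu>) * nt + (1/\<mu>) * inner v nx + l" using hj lb by simp
    hence "0 \<le> \<mu> * ((1/\<mu>) * nt + (1/\<mu>) * inner v nx + l)" using \<mu>0 by simp
    also have "\<dots> = nt + inner v nx + \<mu> * l" using \<mu>0 by (simp add: algebra_simps)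
    finally show ?thesis by (simp add: l \<mu>_def)
  next
    case False
    hence nu00: "nu = 0" using nu0 by simp
    have reg0: "\<And>\<epsilon>. \<epsilon>>0 \<Longrightarrow> \<exists>\<delta>>0. \<forall>w\<in>epi U. norm (w - ((t, x), u0)) < \<delta> \<longrightarrow>
                 inner ((nt, nx), 0::real) (w - ((t, x), u0)) \<le> \<epsilon> * norm (w - ((t, x), u0))"
      using reg nu00 by simp
    have approx: "\<exists>t' x' pt px \<mu>. t' \<in> {0..T} \<and> norm ((t', x') - (t, x)) < \<epsilon> \<and> 0 < \<mu> \<and> \<mu> < \<epsilon>
        \<and> norm (\<mu> *\<^sub>R (pt, px) - (nt, nx)) < \<epsilon> \<and> - pt + H t' x' (- px) \<le> 0" if \<epsilon>: "\<epsilon> > 0" for \<epsilon>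
    proof -
      have e': "min \<epsilon> t > 0" using \<epsilon> t0 by simp
      obtain z p \<mu> where Z: "U z \<noteq> \<infinity>" "norm (z - (t, x)) < min \<epsilon> t" "0 < \<mu>" "\<mu> < min \<epsilon> t"
          "norm (\<mu> *\<^sub>R p - (nt, nx)) < min \<epsilon> t" "p \<in> subdiff U z"
        using horiz_approx[OF LSC nm u0 reg0 e'] by blast
      obtain t' x' where z: "z = (t', x')" by (cases z)
      obtain pt px where p: "p = (pt, px)" by (cases p)
      have t'T: "t' \<in> {0..T}" using Z(1) U_outside z by blast
      have "\<bar>t' - t\<bar> \<le> norm (z - (t, x))" using norm_fst_le[of "t' - t" "x' - x"] z by simp
      hence "t' > 0" using Z(2) by linarith
      hence t'T2: "t' \<in> {0<..T}" using t'T by simp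
      have "(t', x') \<in> edom U" using Z(1) nm z by (simp add: edom_def)
      hence "- pt + H t' x' (- px) \<le> 0" using HJ t'T2 Z(6) z p by blast
      thus ?thesis using t'T Z z p
        by (intro exI[of _ t'] exI[of _ x'] exI[of _ pt] exI[of _ px] exI[of _ \<mu>]) auto
    qed
    have HS: "S * nt \<ge> H t x (- (S *\<^sub>R nx)) - H t x 0" if "S > 0" for S
      by (rule horiz_final[OF H1 H2 t0(1) approx that])
    have "nt + inner v nx \<ge> 0"
    proof (rule ccontr)
      assume "\<not> ?thesis"
      then obtain g where g: "g = - (nt + inner v nx)" "g > 0" by force
      define C where "C = l + H t x 0"
      define S where "S = (\<bar>C\<bar> + 1) / g"
      have S0': "S > 0" using g by (simp add: S_def add_pos_nonneg)
      have "S * nt \<ge> H t x (- (S *\<^sub>R nx)) - H t x 0" by (rule HS[OF S0'])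
      moreover have "inner v (- (S *\<^sub>R nx)) - H t x (- (S *\<^sub>R nx)) \<le> l" by (rule Lb)
      ultimately have "S * nt + S * inner v nx \<ge> - C" by (simp add: C_def)
      moreover have "S * g = - (S * nt + S * inner v nx)" unfolding g(1) by (simp add: algebra_simps)
      ultimately have "S * g \<le> C" by linarith
      moreover have "S * g = \<bar>C\<bar> + 1" using g by (simp add: S_def)
      ultimately show False by linarith
    qed
    thus ?thesis using nu00 by simp
  qed
qed

end
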